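(* The ai-semiring $\mathcal{B}_2^1$ divides the direct square $\mathcal{A}_2^1\times\mathcal{A}_2^1$, i.e., $\mathcal{B}_2^1$ is a homomorphic image of a subsemiring of $\mathcal{A}_2^1\times\mathcal{A}_2^1$.
   Context: An ai-semiring is a structure $(R,+,\cdot)$ with $(R,+)$ a semilattice, $(R,\cdot)$ a semigroup, and multiplication distributing over addition on both sides; in a semilattice, $s\le t$ iff $s+t=t$, and $s+t$ is the supremum of $s,t$ in this order. $\mathcal{A}_2^1$: Let $A_2=\langle e,a\mid eae=e^2=e,\ aea=a,\ a^2=0\rangle=\{e,a,ae,ea,0\}$ and let $A_2^1$ be $A_2$ with an identity element $1$ adjoined. Represent $A_2^1$ by order-preserving maps of the chain $0<1<2$ fixing $2$ (maps act on the right, composition $x(\alpha\beta)=(x\alpha)\beta$): $1\mapsto$ identity; $ea\mapsto(0\mapsto1,1\mapsto1,2\mapsto2)$; $ae\mapsto(0\mapsto0,1\mapsto2,2\mapsto2)$; $a\mapsto(0\mapsto1,1\mapsto2,2\mapsto2)$; $e\mapsto(0\mapsto0,1\mapsto0,2\mapsto2)$; $0\mapsto$ the constant map to $2$. The set of these maps is closed under pointwise maximum, and $\mathcal{A}_2^1=(A_2^1,+,\cdot)$ has addition given by pointwise maximum; equivalently its semilattice order is $e<1<ea$, $1<ae$, $ea<a$, $ae<a$, $a<0$ (with $ea,ae$ incomparable). $\mathcal{B}_2^1$: Let $B_2=\langle c,d\mid cdc=c,\ dcd=d,\ c^2=d^2=0\rangle=\{c,d,cd,dc,0\}$ and $B_2^1$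 be $B_2$ with identity $1$ adjoined. $\mathcal{B}_2^1=(B_2^1,+,\cdot)$ where addition is the join in the order: $0$ is the top, $c,d,cd,dc$ lie directly below $0$, and $1$ lies below $cd$ and $dc$ only (so e.g. $1+cd=cd$, $c+d=0$, $1+c=0$, $cd+dc=0$). *)

theory Defs
  imports Main
begin

datatype A21 = A1 | Ae | Aa | Aea | Aae | A0

text \<open>Representation by order-preserving maps of the chain 0<1<2 fixing 2,
  given as the triple of images (0 alpha, 1 alpha, 2 alpha).\<close>
fun repA :: "A21 \<Rightarrow> nat \<times> nat \<times> nat" where
  "repA A1  = (0, 1, 2)"
| "repA Aea = (1, 1, 2)"
| "repA Aae = (0, 2, 2)"
| "repA Aa  = (1, 2, 2)"
| "repA Ae  = (0, 0, 2)"
| "repA A0  = (2, 2, 2)"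

definition appT :: "nat \<times> nat \<times> nat \<Rightarrow> nat \<Rightarrow> nat" where
  "appT t x = (if x = 0 then fst t else if x = 1 then fst (snd t) else snd (snd t))"

definition compT :: "nat \<times> nat \<times> nat \<Rightarrow> nat \<times> nat \<times> nat \<Rightarrow> nat \<times> nat \<times> nat" where
  "compT s t = (appT t (appT s 0), appT t (appT s 1), appT t (appT s 2))"

definition maxT :: "nat \<times> nat \<times> nat \<Rightarrow> nat \<times> nat \<times> nat \<Rightarrow> nat \<times> nat \<times> nat" where
  "maxT s t = (max (appT s 0) (appT t 0), max (appT s 1) (appT t 1), max (appT s 2) (appT t 2))"

definition multA :: "A21 \<Rightarrow> A21 \<Rightarrow> A21" where
  "multA x y = (THE z. repA z = compT (repA x) (repA y))"

definition addA :: "A21 \<Rightarrow> A21 \<Rightarrow> A21" where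
  "addA x y = (THE z. repA z = maxT (repA x) (repA y))"

datatype B21 = B1 | Bc | Bd | Bcd | Bdc | B0

text \<open>B_2 is the Brandt semigroup of 2x2 matrix units with zero:
  c = E12, d = E21, cd = E11, dc = E22.\<close>
fun unitB :: "B21 \<Rightarrow> (nat \<times> nat) option" where
  "unitB Bc = Some (1, 2)"
| "unitB Bd = Some (2, 1)"
| "unitB Bcd = Some (1, 1)"
| "unitB Bdc = Some (2, 2)"
| "unitB _ = None"

definition multB :: "B21 \<Rightarrow> B21 \<Rightarrow> B21" where
  "multB x y =
     (if x = B1 then y else if y = B1 then x
      else if x = B0 \<or> y = B0 then B0
      else (case (unitB x, unitB y) of
              (Some (i, j), Some (k, l)) \<Rightarrow>
                 (if j = k then (THE z. unitB z = Some (i, l)) else B0)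
            | _ \<Rightarrow> B0))"

text \<open>Join in the order: 0 top; c, d, cd, dc directly below 0; 1 below cd and dc only.\<close>
definition addB :: "B21 \<Rightarrow> B21 \<Rightarrow> B21" where
  "addB x y =
     (if x = y then x
      else if {x, y} = {B1, Bcd} then Bcd
      else if {x, y} = {B1, Bdc} then Bdc
      else B0)"

definition addAA :: "A21 \<times> A21 \<Rightarrow> A21 \<times> A21 \<Rightarrow> A21 \<times> A21" where
  "addAA p q = (addA (fst p) (fst q), addA (snd p) (snd q))"

definition multAA :: "A21 \<times> A21 \<Rightarrow> A21 \<times> A21 \<Rightarrow> A21 \<times> A21" where
  "multAA p q = (multA (fst p) (fst q), multA (snd p) (snd q))"

end

theory Submission
  imports Defs
begin

fun mt :: "A21 \<Rightarrow> A21 \<Rightarrow> A21" where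
  "mt A1 A1 = A1"
| "mt A1 Aea = Aea"
| "mt A1 Aae = Aae"
| "mt A1 Aa = Aa"
| "mt A1 Ae = Ae"
| "mt A1 A0 = A0"
| "mt Aea A1 = Aea"
| "mt Aea Aea = Aea"
| "mt Aea Aae = A0"
| "mt Aea Aa = A0"
| "mt Aea Ae = Ae"
| "mt Aea A0 = A0"
| "mt Aae A1 = Aae"
| "mt Aae Aea = Aa"
| "mt Aae Aae = Aae"
| "mt Aae Aa = Aa"
| "mt Aae Ae = Aae"
| "mt Aae A0 = A0"
| "mt Aa A1 = Aa"
| "mt Aa Aea = Aa"
| "mt Aa Aae = A0"
| "mt Aa Aa = A0"
| "mt Aa Ae = Aae"
| "mt Aa A0 = A0"
| "mt Ae A1 = Ae"
| "mt Ae Aea = Aea"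
| "mt Ae Aae = Ae"
| "mt Ae Aa = Aea"
| "mt Ae Ae = Ae"
| "mt Ae A0 = A0"
| "mt A0 A1 = A0"
| "mt A0 Aea = A0"
| "mt A0 Aae = A0"
| "mt A0 Aa = A0"
| "mt A0 Ae = A0"
| "mt A0 A0 = A0"

fun at :: "A21 \<Rightarrow> A21 \<Rightarrow> A21" where
  "at A1 A1 = A1"
| "at A1 Aea = Aea"
| "at A1 Aae = Aae"
| "at A1 Aa = Aa"
| "at A1 Ae = A1"
| "at A1 A0 = A0"
| "at Aea A1 = Aea"
| "at Aea Aea = Aea"
| "at Aea Aae = Aa"
| "at Aea Aa = Aa"
| "at Aea Ae = Aea"
| "at Aea A0 = A0"
| "at Aae A1 = Aae"
| "at Aae Aea = Aa"
| "at Aae Aae = Aae"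
| "at Aae Aa = Aa"
| "at Aae Ae = Aae"
| "at Aae A0 = A0"
| "at Aa A1 = Aa"
| "at Aa Aea = Aa"
| "at Aa Aae = Aa"
| "at Aa Aa = Aa"
| "at Aa Ae = Aa"
| "at Aa A0 = A0"
| "at Ae A1 = A1"
| "at Ae Aea = Aea"
| "at Ae Aae = Aae"
| "at Ae Aa = Aa"
| "at Ae Ae = Ae"
| "at Ae A0 = A0"
| "at A0 A1 = A0"
| "at A0 Aea = A0"
| "at A0 Aae = A0"
| "at A0 Aa = A0"
| "at A0 Ae = A0"
| "at A0 A0 = A0"

fun mb :: "B21 \<Rightarrow> B21 \<Rightarrow> B21" where
  "mb B1 B1 = B1"
| "mb B1 Bc = Bc"
| "mb B1 Bd = Bd"
| "mb B1 Bcd = Bcd"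
| "mb B1 Bdc = Bdc"
| "mb B1 B0 = B0"
| "mb Bc B1 = Bc"
| "mb Bc Bc = B0"
| "mb Bc Bd = Bcd"
| "mb Bc Bcd = B0"
| "mb Bc Bdc = Bc"
| "mb Bc B0 = B0"
| "mb Bd B1 = Bd"
| "mb Bd Bc = Bdc"
| "mb Bd Bd = B0"
| "mb Bd Bcd = Bd"
| "mb Bd Bdc = B0"
| "mb Bd B0 = B0"
| "mb Bcd B1 = Bcd"
| "mb Bcd Bc = Bc"
| "mb Bcd Bd = B0"
| "mb Bcd Bcd = Bcd"
| "mb Bcd Bdc = B0"
| "mb Bcd B0 = B0"
| "mb Bdc B1 = Bdc"
| "mb Bdc Bc = B0"
| "mb Bdc Bd = Bd"
| "mb Bdc Bcd = B0"
| "mb Bdc Bdc = Bdc"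
| "mb Bdc B0 = B0"
| "mb B0 B1 = B0"
| "mb B0 Bc = B0"
| "mb B0 Bd = B0"
| "mb B0 Bcd = B0"
| "mb B0 Bdc = B0"
| "mb B0 B0 = B0"

fun ab :: "B21 \<Rightarrow> B21 \<Rightarrow> B21" where
  "ab B1 B1 = B1"
| "ab B1 Bc = B0"
| "ab B1 Bd = B0"
| "ab B1 Bcd = Bcd"
| "ab B1 Bdc = Bdc"
| "ab B1 B0 = B0"
| "ab Bc B1 = B0"
| "ab Bc Bc = Bc"
| "ab Bc Bd = B0"
| "ab Bc Bcd = B0"
| "ab Bc Bdc = B0"
| "ab Bc B0 = B0"
| "ab Bd B1 = B0"
| "ab Bd Bc = B0"
| "ab Bd Bd = Bd"
| "ab Bd Bcd = B0"
| "ab Bd Bdc = B0"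
| "ab Bd B0 = B0"
| "ab Bcd B1 = Bcd"
| "ab Bcd Bc = B0"
| "ab Bcd Bd = B0"
| "ab Bcd Bcd = Bcd"
| "ab Bcd Bdc = B0"
| "ab Bcd B0 = B0"
| "ab Bdc B1 = Bdc"
| "ab Bdc Bc = B0"
| "ab Bdc Bd = B0"
| "ab Bdc Bcd = B0"
| "ab Bdc Bdc = Bdc"
| "ab Bdc B0 = B0"
| "ab B0 B1 = B0"
| "ab B0 Bc = B0"
| "ab B0 Bd = B0"
| "ab B0 Bcd = B0"
| "ab B0 Bdc = B0"
| "ab B0 B0 = B0"

fun hh :: "A21 \<times> A21 \<Rightarrow> B21" where
  "hh (A1, A1) = B1"
| "hh (Aa, Ae) = Bc"
| "hh (Ae, Aa) = Bd"
| "hh (Aae, Aea) = Bcd"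
| "hh (Aea, Aae) = Bdc"
| "hh _ = B0"

definition SS :: "(A21 \<times> A21) set" where
  "SS = {(A1, A1), (Aa, Ae), (Ae, Aa), (Aa, A1), (A1, Aa), (A0, Ae), (Aa, Aa), (Aae, Aea), (Aea, Aae), (Ae, A0), (A0, A1), (A1, A0), (Aa, Aea), (A0, Aea), (Aa, Aae), (Aa, A0), (Aae, A0), (Aea, Aa), (A0, Aa), (A0, Aae), (Aea, A0), (Aae, Aa), (A0, A0)}"

lemma repA_inj: "repA z = repA w \<Longrightarrow> z = w"
  by (cases z; cases w; simp)

lemma the_repA: "(THE z. repA z = repA w) = w"
  by (rule the_equality) (auto intro: repA_inj)

lemma multA_tab: "multA x y = mt x y"
proof -
  have "compT (repA x) (repA y) = repA (mt x y)"
    by (cases x; cases y; simp add: compT_def appT_def)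
  then show ?thesis unfolding multA_def using the_repA by simp
qed

lemma addA_tab: "addA x y = at x y"
proof -
  have "maxT (repA x) (repA y) = repA (at x y)"
    by (cases x; cases y; simp add: maxT_def appT_def)
  then show ?thesis unfolding addA_def using the_repA by simp
qed

lemma unitB_inj0: "unitB z = unitB w \<Longrightarrow> unitB z \<noteq> None \<Longrightarrow> z = w"
  by (cases z; cases w; simp)

lemma unitB_inj: "unitB w = Some v \<Longrightarrow> unitB z = Some v \<Longrightarrow> z = w"
  using unitB_inj0[of z w] by simp

lemma the_unitB: "unitB w = Some v \<Longrightarrow> (THE z. unitB z = Some v) = w"
  by (rule the_equality, simp) (rule unitB_inj)

lemma theB: "(THE z. unitB z = Some (1,2)) = Bc" "(THE z. unitB z = Some (2,1)) = Bd"
  "(THE z. unitB z = Some (1,1)) = Bcd" "(THE z. unitB z = Some (2,2)) = Bdc"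
  by (rule the_unitB; simp)+

lemma multB_tab: "multB x y = mb x y"
  by (cases x; cases y; simp add: multB_def theB[simplified])

lemma addB_tab: "addB x y = ab x y"
  by (cases x; cases y; simp add: addB_def doubleton_eq_iff)

theorem proposition3p2:
  shows "\<exists>(S :: (A21 \<times> A21) set) (h :: A21 \<times> A21 \<Rightarrow> B21).
           S \<noteq> {} \<and>
           (\<forall>p\<in>S. \<forall>q\<in>S. addAA p q \<in> S \<and> multAA p q \<in> S) \<and>
           (\<forall>p\<in>S. \<forall>q\<in>S. h (addAA p q) = addB (h p) (h q)
                          \<and> h (multAA p q) = multB (h p) (h q)) \<and>
           h ` S = UNIV"
proof (intro exI conjI)
  show "SS \<noteq> {}" by (simp add: SS_def)
  show "\<forall>p\<in>SS. \<forall>q\<in>SS. addAA p q \<in> SS \<and> multAA p q \<in> SS"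
    unfolding addAA_def multAA_def addA_tab[abs_def] multA_tab[abs_def] SS_def by code_simp
  show "\<forall>p\<in>SS. \<forall>q\<in>SS. hh (addAA p q) = addB (hh p) (hh q)
                          \<and> hh (multAA p q) = multB (hh p) (hh q)"
    unfolding addAA_def multAA_def addA_tab[abs_def] multA_tab[abs_def] addB_tab[abs_def] multB_tab[abs_def] SS_def by code_simp
  show "hh ` SS = UNIV"
  proof (rule set_eqI, rule iffI)
    fix b :: B21
    show "b \<in> hh ` SS"
      by (cases b) (simp_all add: SS_def image_iff)
  qed simp
qed

end
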